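(* Let $x=(x_1,\dots,x_n)$, $u$ an indeterminate, $t=(t_1,t_2,\dots)$. Then $$\prod_{i=1}^n(u\oplus x_i)=(u|t)^n+\sum_{r=1}^n(u|t)^{n-r}\big(1+\beta\,u\oplus t_{n+1-r}\big)G_{1^r}(x|\ominus t).$$ Setting $t_j=0$ for all $j$ this becomes $$\prod_{i=1}^n(u\oplus x_i)=u^n+(1+\beta u)\sum_{r=1}^nu^{n-r}G_{1^r}(x_1,\dots,x_n),$$ and for $r=1,\dots,n$ $$e_r(x_1,\dots,x_n)=\sum_{s=r}^n(-\beta)^{s-r}\binom{s-1}{s-r}G_{1^s}(x_1,\dots,x_n),$$ where $e_r$ is the elementary symmetric polynomial.
   Context: $\beta$ indeterminate, $x\oplus y=x+y+\beta xy$, $x\ominus y=(x-y)/(1+\beta y)$, $\ominus x=-x/(1+\beta x)$, $\ominus t=(\ominus t_1,\ominus t_2,\dots)$. $(u|t)^m=\prod_{i=1}^m(u\oplus t_i)$. $1^r$ is the partition with $r$ parts equal to $1$. Factorial Grothendieck polynomial: $G_\lambda(x|s)=\sum_T\beta^{|T|-|\lambda|}\prod_{(i,j)\in\lambda}\prod_{r\in T(i,j)}(x_r\oplus s_{r+j-i})$, summed over set-valued tableaux $T$ of shape $\lambda$ (nonempty subsets of $[n]$ in the boxes $(i,j)$, row $i$ column $j$, with $\max T(i,j)\le\min T(i,j+1)$, $\max T(i,j)<\min T(i+1,j)$), $|T|$ the total number of entries; $G_\lambda(x_1,\dots,x_n)$ denotes $G_\lambda(x|s)$ with all $s_j=0$.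 *)

theory Defs
  imports Main
begin

definition oplus :: "'a::field \<Rightarrow> 'a \<Rightarrow> 'a \<Rightarrow> 'a" where
  "oplus beta x y = x + y + beta * x * y"

definition ominus1 :: "'a::field \<Rightarrow> 'a \<Rightarrow> 'a" where
  "ominus1 beta x = - x / (1 + beta * x)"

definition uprod :: "'a::field \<Rightarrow> 'a \<Rightarrow> (nat \<Rightarrow> 'a) \<Rightarrow> nat \<Rightarrow> 'a" where
  "uprod beta u t m = (\<Prod>i=1..m. oplus beta u (t i))"

text \<open>Young diagram of a partition given as a list of (weakly decreasing) parts;
  boxes (i,j) with row i and column j, 1-based.\<close>
definition diagram :: "nat list \<Rightarrow> (nat \<times> nat) set" where
  "diagram lam = {(i,j). 1 \<le> i \<and> i \<le> length lam \<and> 1 \<le> j \<and> j \<le> lam ! (i - 1)}"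

definition svt :: "nat list \<Rightarrow> nat \<Rightarrow> ((nat \<times> nat) \<Rightarrow> nat set) set" where
  "svt lam n = {T. (\<forall>b\<in>diagram lam. T b \<noteq> {} \<and> T b \<subseteq> {1..n})
     \<and> (\<forall>b. b \<notin> diagram lam \<longrightarrow> T b = {})
     \<and> (\<forall>i j. (i,j) \<in> diagram lam \<and> (i,j+1) \<in> diagram lam \<longrightarrow> Max (T (i,j)) \<le> Min (T (i,j+1)))
     \<and> (\<forall>i j. (i,j) \<in> diagram lam \<and> (i+1,j) \<in> diagram lam \<longrightarrow> Max (T (i,j)) < Min (T (i+1,j)))}"

definition tsize :: "nat list \<Rightarrow> ((nat \<times> nat) \<Rightarrow> nat set) \<Rightarrow> nat" where
  "tsize lam T = (\<Sum>b\<in>diagram lam. card (T b))"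

definition factG :: "nat list \<Rightarrow> nat \<Rightarrow> 'a::field \<Rightarrow> (nat \<Rightarrow> 'a) \<Rightarrow> (nat \<Rightarrow> 'a) \<Rightarrow> 'a" where
  "factG lam n beta x s = (\<Sum>T\<in>svt lam n. beta ^ (tsize lam T - sum_list lam) *
      (\<Prod>(i,j)\<in>diagram lam. \<Prod>r\<in>T (i,j). oplus beta (x r) (s (r + j - i))))"

definition esym :: "nat \<Rightarrow> (nat \<Rightarrow> 'a::field) \<Rightarrow> nat \<Rightarrow> 'a" where
  "esym n x r = (\<Sum>S\<in>{S. S \<subseteq> {1..n} \<and> card S = r}. \<Prod>i\<in>S. x i)"

end

theory Submission
  imports Defs
begin


definition CB :: "nat \<Rightarrow> nat \<Rightarrow> (nat \<Rightarrow> nat set) set" where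
  "CB n r = {B. (\<forall>i\<in>{1..r}. B i \<noteq> {} \<and> B i \<subseteq> {1..n}) \<and> (\<forall>i. i \<notin> {1..r} \<longrightarrow> B i = {})
     \<and> (\<forall>i a b. 1 \<le> i \<longrightarrow> i < r \<longrightarrow> a \<in> B i \<longrightarrow> b \<in> B (Suc i) \<longrightarrow> a < b)}"

definition wt :: "'a::field \<Rightarrow> (nat \<Rightarrow> 'a) \<Rightarrow> (nat \<Rightarrow> 'a) \<Rightarrow> nat \<Rightarrow> (nat \<Rightarrow> nat set) \<Rightarrow> 'a" where
  "wt beta x s r B = (\<Prod>i=1..r. beta ^ (card (B i) - 1) * (\<Prod>a\<in>B i. oplus beta (x a) (s (a + 1 - i))))"

fun col :: "'a::field \<Rightarrow> (nat \<Rightarrow> 'a) \<Rightarrow> (nat \<Rightarrow> 'a) \<Rightarrow> nat \<Rightarrow> nat \<Rightarrow> 'a" where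
  "col b x s 0 0 = 1"
| "col b x s 0 (Suc r) = 0"
| "col b x s (Suc n) 0 = 1"
| "col b x s (Suc n) (Suc r) = col b x s n (Suc r) * (1 + b * oplus b (x (Suc n)) (s (Suc n - r)))
     + col b x s n r * oplus b (x (Suc n)) (s (Suc n - r))"

lemma col_zero: "r > n \<Longrightarrow> col b x s n r = 0"
proof (induction n arbitrary: r)
  case 0 then show ?case by (cases r) auto
next
  case (Suc n) then show ?case by (cases r) auto
qed

lemma CB_finite: "finite (CB n r)"
proof -
  have "CB n r \<subseteq> {B. \<forall>i. (i \<in> {1..r} \<longrightarrow> B i \<in> Pow {1..n}) \<and> (i \<notin> {1..r} \<longrightarrow> B i = {})}"
    by (auto simp: CB_def)
  moreover have "finite {B. \<forall>i. (i \<in> {1..r} \<longrightarrow> B i \<in> Pow {1..n}) \<and> (i \<notin> {1..r} \<longrightarrow> B i = {})}"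
    by (rule finite_set_of_finite_funs) auto
  ultimately show ?thesis by (rule finite_subset)
qed

lemma CB_order: "B \<in> CB n r \<Longrightarrow> 1 \<le> i \<Longrightarrow> i < j \<Longrightarrow> j \<le> r \<Longrightarrow> a \<in> B i \<Longrightarrow> b \<in> B j \<Longrightarrow> a < b"
proof (induction j arbitrary: b)
  case 0 then show ?case by simp
next
  case (Suc j)
  show ?case
  proof (cases "i = j")
    case True then show ?thesis using Suc.prems unfolding CB_def by auto
  next
    case False
    have "B j \<noteq> {}" using Suc.prems False unfolding CB_def by auto
    then obtain c where c: "c \<in> B j" by blast
    have "a < c" using Suc.IH[OF Suc.prems(1,2) _ _ Suc.prems(5) c] Suc.prems False by auto
    have j: "1 \<le> j" "j < r" using Suc.prems False by auto
    have "c < b" using Suc.prems(1) c j Suc.prems(6) unfolding CB_def by blast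
    with \<open>a < c\<close> show ?thesis by simp
  qed
qed

lemma opl_om: assumes h: "1 + beta * T \<noteq> 0" shows "oplus beta x (ominus1 beta T) = (x - T) / (1 + beta * T)"
proof -
  have "oplus beta x (ominus1 beta T) = x - T / (1 + beta * T) - beta * x * T / (1 + beta * T)"
    by (simp add: oplus_def ominus1_def)
  also have "\<dots> = (x * (1 + beta * T) - T - beta * x * T) / (1 + beta * T)"
    using h by (simp add: diff_divide_distrib)
  also have "\<dots> = (x - T) / (1 + beta * T)" by (simp add: algebra_simps)
  finally show ?thesis .
qed

lemma opl_om1: assumes h: "1 + beta * T \<noteq> 0"
  shows "1 + beta * oplus beta x (ominus1 beta T) = (1 + beta * x) / (1 + beta * T)"
proof -
  have "1 + beta * oplus beta x (ominus1 beta T) = ((1 + beta * T) + beta * (x - T)) / (1 + beta * T)"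
    using h by (simp add: opl_om[OF h] add_divide_distrib)
  also have "\<dots> = (1 + beta * x) / (1 + beta * T)" by (simp add: algebra_simps)
  finally show ?thesis .
qed

lemma opl_one: "1 + beta * oplus beta u T = (1 + beta * u) * (1 + beta * T)"
  by (simp add: oplus_def algebra_simps)

lemma alg1:
  fixes beta u x T1 T2 :: "'a::field"
  assumes h1: "1 + beta * T1 \<noteq> 0" and h2: "1 + beta * T2 \<noteq> 0"
  shows "oplus beta u T2 * (1 + beta * oplus beta u T1) * (1 + beta * oplus beta x (ominus1 beta T1))
     + (1 + beta * oplus beta u T2) * oplus beta x (ominus1 beta T2)
     = oplus beta u x * (1 + beta * oplus beta u T2)"
proof -
  have e1: "oplus beta u T2 * (1 + beta * oplus beta u T1) * (1 + beta * oplus beta x (ominus1 beta T1))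
     = oplus beta u T2 * (1 + beta * u) * (1 + beta * x)"
    unfolding opl_om1[OF h1] unfolding opl_one using h1 by simp
  have e2: "(1 + beta * oplus beta u T2) * oplus beta x (ominus1 beta T2) = (1 + beta * u) * (x - T2)"
    unfolding opl_om[OF h2] opl_one using h2 by simp
  have e3: "oplus beta u T2 * (1 + beta * u) * (1 + beta * x) + (1 + beta * u) * (x - T2)
     = oplus beta u x * ((1 + beta * u) * (1 + beta * T2))"
    by (simp add: oplus_def algebra_simps)
  show ?thesis unfolding e1 e2 unfolding opl_one[of beta u T2] by (rule e3)
qed

lemma alg2:
  fixes beta u x T :: "'a::field"
  assumes h: "1 + beta * T \<noteq> 0"
  shows "oplus beta u T + (1 + beta * oplus beta u T) * oplus beta x (ominus1 beta T) = oplus beta u x"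
proof -
  have "(1 + beta * oplus beta u T) * oplus beta x (ominus1 beta T) = (1 + beta * u) * (x - T)"
    unfolding opl_om[OF h] opl_one using h by simp
  moreover have "oplus beta u T + (1 + beta * u) * (x - T) = oplus beta u x"
    by (simp add: oplus_def algebra_simps)
  ultimately show ?thesis by simp
qed



lemma diag_col: "diagram (replicate r 1) = (\<lambda>i. (i, 1::nat)) ` {1..r}"
  unfolding diagram_def by (auto simp: nth_replicate)

lemma pow_sum_lem:
  assumes "finite A" "\<forall>i\<in>A. 1 \<le> c i"
  shows "(b::'a::comm_monoid_mult) ^ (sum c A - card A) = (\<Prod>i\<in>A. b ^ (c i - 1))"
proof -
  have "(\<Sum>i\<in>A. c i - 1) = sum c A - (\<Sum>i\<in>A. 1)"
    using assms by (intro sum_subtractf_nat) auto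
  then have "sum c A - card A = (\<Sum>i\<in>A. c i - 1)" by simp
  then show ?thesis by (simp add: power_sum)
qed

lemma maxmin: "finite A \<Longrightarrow> finite B \<Longrightarrow> A \<noteq> {} \<Longrightarrow> B \<noteq> {} \<Longrightarrow>
   (Max A < (Min B::nat)) = (\<forall>a\<in>A. \<forall>b\<in>B. a < b)"
  by (auto simp: Max_less_iff Min_gr_iff)

lemma svt_col_iff:
  "T \<in> svt (replicate r 1) n \<longleftrightarrow> (\<lambda>i. T (i,1)) \<in> CB n r \<and> (\<forall>i j. j \<noteq> 1 \<longrightarrow> T (i,j) = {})"
proof
  assume T: "T \<in> svt (replicate r 1) n"
  have a: "\<forall>i\<in>{1..r}. T (i,1) \<noteq> {} \<and> T (i,1) \<subseteq> {1..n}" using T unfolding svt_def diag_col by auto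
  have b: "\<forall>b. b \<notin> (\<lambda>i. (i, 1::nat)) ` {1..r} \<longrightarrow> T b = {}" using T unfolding svt_def diag_col by auto
  have c: "\<forall>i. 1 \<le> i \<longrightarrow> i < r \<longrightarrow> Max (T (i,1)) < Min (T (Suc i,1))"
    using T unfolding svt_def diag_col by auto
  have c': "\<forall>i a b. 1 \<le> i \<longrightarrow> i < r \<longrightarrow> a \<in> T (i,1) \<longrightarrow> b \<in> T (Suc i,1) \<longrightarrow> a < b"
  proof (intro allI impI)
    fix i a b assume h: "1 \<le> i" "i < r" "a \<in> T (i,1)" "b \<in> T (Suc i,1)"
    have s1: "T (i,1) \<subseteq> {1..n}" "T (i,1) \<noteq> {}" using a h by auto
    have s2: "T (Suc i,1) \<subseteq> {1..n}" "T (Suc i,1) \<noteq> {}" using a h by auto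
    have f1: "finite (T (i,1))" "T (i,1) \<noteq> {}" using s1 finite_subset by auto
    have f2: "finite (T (Suc i,1))" "T (Suc i,1) \<noteq> {}" using s2 finite_subset by auto
    show "a < b" using c h maxmin[OF f1(1) f2(1) f1(2) f2(2)] by auto
  qed
  have b1: "\<forall>i. i \<notin> {1..r} \<longrightarrow> T (i,1) = {}"
  proof (intro allI impI)
    fix i :: nat assume "i \<notin> {1..r}"
    then have "(i,1) \<notin> (\<lambda>i. (i, 1::nat)) ` {1..r}" by auto
    then show "T (i,1) = {}" using b by blast
  qed
  have b2: "\<forall>i j. j \<noteq> 1 \<longrightarrow> T (i,j) = {}"
  proof (intro allI impI)
    fix i j :: nat assume "j \<noteq> 1"
    then have "(i,j) \<notin> (\<lambda>i. (i, 1::nat)) ` {1..r}" by auto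
    then show "T (i,j) = {}" using b by blast
  qed
  show "(\<lambda>i. T (i,1)) \<in> CB n r \<and> (\<forall>i j. j \<noteq> 1 \<longrightarrow> T (i,j) = {})"
    unfolding CB_def mem_Collect_eq using a b1 b2 c' by blast
next
  assume h: "(\<lambda>i. T (i,1)) \<in> CB n r \<and> (\<forall>i j. j \<noteq> 1 \<longrightarrow> T (i,j) = {})"
  have a: "\<forall>i\<in>{1..r}. T (i,1) \<noteq> {} \<and> T (i,1) \<subseteq> {1..n}" using h unfolding CB_def by auto
  have c: "\<forall>i. 1 \<le> i \<longrightarrow> i < r \<longrightarrow> Max (T (i,1)) < Min (T (Suc i,1))"
  proof (intro allI impI)
    fix i assume hi: "1 \<le> i" "i < r"
    have s1: "T (i,1) \<subseteq> {1..n}" "T (i,1) \<noteq> {}" using a hi by auto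
    have s2: "T (Suc i,1) \<subseteq> {1..n}" "T (Suc i,1) \<noteq> {}" using a hi by auto
    have f1: "finite (T (i,1))" "T (i,1) \<noteq> {}" using s1 finite_subset by auto
    have f2: "finite (T (Suc i,1))" "T (Suc i,1) \<noteq> {}" using s2 finite_subset by auto
    show "Max (T (i,1)) < Min (T (Suc i,1))" using h hi maxmin[OF f1(1) f2(1) f1(2) f2(2)]
      unfolding CB_def by auto
  qed
  show "T \<in> svt (replicate r 1) n"
    unfolding svt_def diag_col mem_Collect_eq
  proof (intro conjI)
    show "\<forall>b\<in>(\<lambda>i. (i, 1)) ` {1..r}. T b \<noteq> {} \<and> T b \<subseteq> {1..n}" using a by auto
    show "\<forall>b. b \<notin> (\<lambda>i. (i, 1)) ` {1..r} \<longrightarrow> T b = {}"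
    proof (intro allI impI)
      fix b assume nb: "b \<notin> (\<lambda>i. (i, 1::nat)) ` {1..r}"
      obtain i j where bij: "b = (i,j)" by (cases b)
      show "T b = {}"
      proof (cases "j = 1")
        case True then have "i \<notin> {1..r}" using nb bij by auto
        then show ?thesis using h True bij unfolding CB_def by auto
      next
        case False then show ?thesis using h bij by auto
      qed
    qed
    show "\<forall>i j. (i, j) \<in> (\<lambda>i. (i, 1)) ` {1..r} \<and> (i, j + 1) \<in> (\<lambda>i. (i, 1)) ` {1..r} \<longrightarrow>
          Max (T (i, j)) \<le> Min (T (i, j + 1))" by auto
    show "\<forall>i j. (i, j) \<in> (\<lambda>i. (i, 1)) ` {1..r} \<and> (i + 1, j) \<in> (\<lambda>i. (i, 1)) ` {1..r} \<longrightarrow>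
          Max (T (i, j)) < Min (T (i + 1, j))" using c by auto
  qed
qed

lemma factG_CB: "factG (replicate r 1) n beta x s = (\<Sum>B\<in>CB n r. wt beta x s r B)"
  unfolding factG_def
proof (rule sum.reindex_bij_witness[where i = "\<lambda>B (i,j). if j = 1 then B i else {}" and j = "\<lambda>T i. T (i,1)"])
  fix T assume T: "T \<in> svt (replicate r 1) n"
  then have h: "(\<lambda>i. T (i,1)) \<in> CB n r" "\<forall>i j. j \<noteq> 1 \<longrightarrow> T (i,j) = {}" using svt_col_iff by auto
  show "(\<lambda>(i, j). if j = 1 then T (i, 1) else {}) = T" using h(2) by (auto simp: fun_eq_iff)
  show "(\<lambda>i. T (i, 1)) \<in> CB n r" by (rule h(1))
  have inj: "inj_on (\<lambda>i. (i, 1::nat)) {1..r}" by (auto simp: inj_on_def)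
  have fin: "\<forall>i\<in>{1..r}. 1 \<le> card (T (i,1))"
  proof
    fix i assume i: "i \<in> {1..r}"
    have "T (i,1) \<subseteq> {1..n}" "T (i,1) \<noteq> {}" using h(1) i unfolding CB_def by auto
    then show "1 \<le> card (T (i,1))" using finite_subset[of "T (i,1)" "{1..n}"] by (auto simp: Suc_le_eq card_gt_0_iff)
  qed
  have ts: "tsize (replicate r 1) T = (\<Sum>i=1..r. card (T (i,1)))"
    unfolding tsize_def diag_col by (rule trans[OF sum.reindex[OF inj]]) (simp add: o_def)
  have pr: "(\<Prod>(i, j)\<in>diagram (replicate r 1). \<Prod>a\<in>T (i, j). oplus beta (x a) (s (a + j - i)))
     = (\<Prod>i=1..r. \<Prod>a\<in>T (i, 1). oplus beta (x a) (s (a + 1 - i)))"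
    unfolding diag_col by (rule trans[OF prod.reindex[OF inj]]) (simp add: o_def)
  have sl: "sum_list (replicate r (1::nat)) = r" by (simp add: sum_list_replicate)
  show "wt beta x s r (\<lambda>i. T (i, 1)) = beta ^ (tsize (replicate r 1) T - sum_list (replicate r 1)) *
        (\<Prod>(i, j)\<in>diagram (replicate r 1). \<Prod>r\<in>T (i, j). oplus beta (x r) (s (r + j - i)))"
  proof -
    have pw: "beta ^ ((\<Sum>i=1..r. card (T (i,1))) - r) = (\<Prod>i=1..r. beta ^ (card (T (i,1)) - 1))"
      using pow_sum_lem[of "{1..r}" "\<lambda>i. card (T (i,1))" beta] fin by simp
    show ?thesis unfolding pr ts sl wt_def pw by (rule prod.distrib)
  qed
next
  fix B assume B: "B \<in> CB n r"
  show "(\<lambda>i. (\<lambda>(i, j). if j = 1 then B i else {}) (i, 1)) = B" by simp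
  show "(\<lambda>(i, j). if j = 1 then B i else {}) \<in> svt (replicate r 1) n"
    unfolding svt_col_iff using B by simp
qed



lemma CB_0: "CB n 0 = {\<lambda>_. {}}"
  unfolding CB_def by (auto simp: fun_eq_iff)

lemma CB_empty: "CB 0 (Suc r) = {}"
  unfolding CB_def by auto

lemma wt_Suc: "wt beta x s (Suc r) B = wt beta x s r B *
   (beta ^ (card (B (Suc r)) - 1) * (\<Prod>a\<in>B (Suc r). oplus beta (x a) (s (a + 1 - Suc r))))"
  unfolding wt_def by (simp add: prod.cl_ivl_Suc)

lemma wt_upd: "wt beta x s (Suc r) (B(Suc r := X)) = wt beta x s r B *
   (beta ^ (card X - 1) * (\<Prod>a\<in>X. oplus beta (x a) (s (a + 1 - Suc r))))"
proof -
  have "wt beta x s r (B(Suc r := X)) = wt beta x s r B"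
    unfolding wt_def by (rule prod.cong) auto
  then show ?thesis by (simp add: wt_Suc)
qed

lemma CB_fin_block: assumes "B \<in> CB n r" shows "finite (B i)"
proof (cases "i \<in> {1..r}")
  case True
  then have "B i \<subseteq> {1..n}" using assms unfolding CB_def by blast
  then show ?thesis using finite_subset by blast
next
  case False
  then show ?thesis using assms unfolding CB_def by auto
qed

lemma CB_small: assumes B: "B \<in> CB (Suc n) (Suc r)" and i: "1 \<le> i" "i \<le> r" and a: "a \<in> B i"
  shows "a \<le> n"
proof -
  have ne: "B (Suc r) \<noteq> {}" and sub: "B (Suc r) \<subseteq> {1..Suc n}" using B unfolding CB_def by auto
  from ne obtain b where b1: "b \<in> B (Suc r)" by blast
  with sub have b: "b \<in> B (Suc r)" "b \<le> Suc n" by auto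
  have "a < b" using CB_order[OF B i(1) _ _ a b(1)] i by auto
  then show ?thesis using b by simp
qed

lemma CB_split: "CB (Suc n) (Suc r) = CB n (Suc r) \<union> (\<lambda>B. B(Suc r := {Suc n})) ` CB n r
   \<union> (\<lambda>B. B(Suc r := insert (Suc n) (B (Suc r)))) ` CB n (Suc r)"
proof (intro equalityI subsetI)
  fix B assume B: "B \<in> CB (Suc n) (Suc r)"
  have Bi: "\<forall>i\<in>{1..Suc r}. B i \<noteq> {} \<and> B i \<subseteq> {1..Suc n}" "\<forall>i. i \<notin> {1..Suc r} \<longrightarrow> B i = {}"
    "\<forall>i a b. 1 \<le> i \<longrightarrow> i < Suc r \<longrightarrow> a \<in> B i \<longrightarrow> b \<in> B (Suc i) \<longrightarrow> a < b"
    using B unfolding CB_def by auto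
  have low: "\<forall>i\<in>{1..r}. B i \<subseteq> {1..n}"
  proof
    fix i assume i: "i \<in> {1..r}"
    show "B i \<subseteq> {1..n}"
    proof
      fix a assume a: "a \<in> B i"
      have "i \<in> {1..Suc r}" using i by auto
      then have "B i \<subseteq> {1..Suc n}" using Bi(1) by blast
      then have "a \<in> {1..Suc n}" using a by blast
      moreover have "a \<le> n" using CB_small[OF B _ _ a] i by auto
      ultimately show "a \<in> {1..n}" by auto
    qed
  qed
  consider "Suc n \<notin> B (Suc r)" | "B (Suc r) = {Suc n}" | "Suc n \<in> B (Suc r)" "B (Suc r) \<noteq> {Suc n}" by blast
  then show "B \<in> CB n (Suc r) \<union> (\<lambda>B. B(Suc r := {Suc n})) ` CB n r
   \<union> (\<lambda>B. B(Suc r := insert (Suc n) (B (Suc r)))) ` CB n (Suc r)"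
  proof cases
    case 1
    have "B \<in> CB n (Suc r)" unfolding CB_def mem_Collect_eq
    proof (intro conjI)
      show "\<forall>i\<in>{1..Suc r}. B i \<noteq> {} \<and> B i \<subseteq> {1..n}"
      proof
        fix i assume i: "i \<in> {1..Suc r}"
        show "B i \<noteq> {} \<and> B i \<subseteq> {1..n}"
        proof (cases "i = Suc r")
          case True
          have "B (Suc r) \<subseteq> {1..Suc n}" "B (Suc r) \<noteq> {}" using Bi(1) by auto
          then show ?thesis using 1 True by (fastforce simp: subset_iff le_Suc_eq)
        next
          case False then show ?thesis using Bi(1) low i by auto
        qed
      qed
      show "\<forall>i. i \<notin> {1..Suc r} \<longrightarrow> B i = {}" by (rule Bi(2))
      show "\<forall>i a b. 1 \<le> i \<longrightarrow> i < Suc r \<longrightarrow> a \<in> B i \<longrightarrow> b \<in> B (Suc i) \<longrightarrow> a < b" by (rule Bi(3))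
    qed
    then show ?thesis by blast
  next
    case 2
    let ?B' = "B(Suc r := {})"
    have "?B' \<in> CB n r" unfolding CB_def mem_Collect_eq
    proof (intro conjI)
      show "\<forall>i\<in>{1..r}. ?B' i \<noteq> {} \<and> ?B' i \<subseteq> {1..n}" using Bi(1) low by auto
      show "\<forall>i. i \<notin> {1..r} \<longrightarrow> ?B' i = {}" using Bi(2) by auto
      show "\<forall>i a b. 1 \<le> i \<longrightarrow> i < r \<longrightarrow> a \<in> ?B' i \<longrightarrow> b \<in> ?B' (Suc i) \<longrightarrow> a < b"
        using Bi(3) by auto
    qed
    moreover have "B = ?B'(Suc r := {Suc n})" using 2 by (auto simp: fun_eq_iff)
    ultimately show ?thesis by blast
  next
    case 3
    let ?B' = "B(Suc r := B (Suc r) - {Suc n})"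
    have "?B' \<in> CB n (Suc r)" unfolding CB_def mem_Collect_eq
    proof (intro conjI)
      show "\<forall>i\<in>{1..Suc r}. ?B' i \<noteq> {} \<and> ?B' i \<subseteq> {1..n}"
      proof
        fix i assume i: "i \<in> {1..Suc r}"
        show "?B' i \<noteq> {} \<and> ?B' i \<subseteq> {1..n}"
        proof (cases "i = Suc r")
          case True
          have "B (Suc r) \<subseteq> {1..Suc n}" "B (Suc r) \<noteq> {}" using Bi(1) by auto
          then show ?thesis using 3 True by (fastforce simp: subset_iff le_Suc_eq)
        next
          case False then show ?thesis using Bi(1) low i by auto
        qed
      qed
      show "\<forall>i. i \<notin> {1..Suc r} \<longrightarrow> ?B' i = {}" using Bi(2) by auto
      show "\<forall>i a b. 1 \<le> i \<longrightarrow> i < Suc r \<longrightarrow> a \<in> ?B' i \<longrightarrow> b \<in> ?B' (Suc i) \<longrightarrow> a < b"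
        using Bi(3) by auto
    qed
    moreover have "B = ?B'(Suc r := insert (Suc n) (?B' (Suc r)))" using 3 by (auto simp: fun_eq_iff)
    ultimately show ?thesis by blast
  qed
next
  fix B assume "B \<in> CB n (Suc r) \<union> (\<lambda>B. B(Suc r := {Suc n})) ` CB n r
   \<union> (\<lambda>B. B(Suc r := insert (Suc n) (B (Suc r)))) ` CB n (Suc r)"
  then consider "B \<in> CB n (Suc r)" | B' where "B' \<in> CB n r" "B = B'(Suc r := {Suc n})"
    | B' where "B' \<in> CB n (Suc r)" "B = B'(Suc r := insert (Suc n) (B' (Suc r)))" by blast
  then show "B \<in> CB (Suc n) (Suc r)"
  proof cases
    case 1
    have sub: "{1..n} \<subseteq> {1..Suc n}" by auto
    show ?thesis using 1 sub unfolding CB_def mem_Collect_eq by blast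
  next
    case 2
    have Bi: "\<forall>i\<in>{1..r}. B' i \<noteq> {} \<and> B' i \<subseteq> {1..n}" "\<forall>i. i \<notin> {1..r} \<longrightarrow> B' i = {}"
      "\<forall>i a b. 1 \<le> i \<longrightarrow> i < r \<longrightarrow> a \<in> B' i \<longrightarrow> b \<in> B' (Suc i) \<longrightarrow> a < b"
      using 2(1) unfolding CB_def by auto
    show ?thesis unfolding CB_def mem_Collect_eq 2(2)
    proof (intro conjI)
      show "\<forall>i\<in>{1..Suc r}. (B'(Suc r := {Suc n})) i \<noteq> {} \<and> (B'(Suc r := {Suc n})) i \<subseteq> {1..Suc n}"
      proof
        fix i assume i: "i \<in> {1..Suc r}"
        show "(B'(Suc r := {Suc n})) i \<noteq> {} \<and> (B'(Suc r := {Suc n})) i \<subseteq> {1..Suc n}"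
        proof (cases "i = Suc r")
          case False
          then have "i \<in> {1..r}" using i by auto
          then have "B' i \<subseteq> {1..n}" "B' i \<noteq> {}" using Bi(1) by blast+
          then show ?thesis using False by auto
        qed auto
      qed
      show "\<forall>i. i \<notin> {1..Suc r} \<longrightarrow> (B'(Suc r := {Suc n})) i = {}" using Bi(2) by auto
      show "\<forall>i a b. 1 \<le> i \<longrightarrow> i < Suc r \<longrightarrow> a \<in> (B'(Suc r := {Suc n})) i \<longrightarrow>
          b \<in> (B'(Suc r := {Suc n})) (Suc i) \<longrightarrow> a < b"
      proof (intro allI impI)
        fix i a b assume h: "1 \<le> i" "i < Suc r" "a \<in> (B'(Suc r := {Suc n})) i" "b \<in> (B'(Suc r := {Suc n})) (Suc i)"
        show "a < b"
        proof (cases "Suc i = Suc r")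
          case True
          then have ab: "a \<in> B' i" "b = Suc n" "i \<in> {1..r}" using h by auto
          then have "a \<in> {1..n}" using Bi(1) by blast
          then show ?thesis using ab by simp
        next
          case False then show ?thesis using h Bi(3) by auto
        qed
      qed
    qed
  next
    case 3
    have Bi: "\<forall>i\<in>{1..Suc r}. B' i \<noteq> {} \<and> B' i \<subseteq> {1..n}" "\<forall>i. i \<notin> {1..Suc r} \<longrightarrow> B' i = {}"
      "\<forall>i a b. 1 \<le> i \<longrightarrow> i < Suc r \<longrightarrow> a \<in> B' i \<longrightarrow> b \<in> B' (Suc i) \<longrightarrow> a < b"
      using 3(1) unfolding CB_def by auto
    let ?X = "B'(Suc r := insert (Suc n) (B' (Suc r)))"
    show ?thesis unfolding CB_def mem_Collect_eq 3(2)
    proof (intro conjI)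
      show "\<forall>i\<in>{1..Suc r}. ?X i \<noteq> {} \<and> ?X i \<subseteq> {1..Suc n}"
      proof
        fix i assume i: "i \<in> {1..Suc r}"
        then have "B' i \<subseteq> {1..n}" "B' i \<noteq> {}" using Bi(1) by blast+
        then show "?X i \<noteq> {} \<and> ?X i \<subseteq> {1..Suc n}" by auto
      qed
      show "\<forall>i. i \<notin> {1..Suc r} \<longrightarrow> ?X i = {}" using Bi(2) by auto
      show "\<forall>i a b. 1 \<le> i \<longrightarrow> i < Suc r \<longrightarrow> a \<in> ?X i \<longrightarrow> b \<in> ?X (Suc i) \<longrightarrow> a < b"
      proof (intro allI impI)
        fix i a b assume h: "1 \<le> i" "i < Suc r" "a \<in> ?X i" "b \<in> ?X (Suc i)"
        show "a < b"
        proof (cases "Suc i = Suc r")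
          case True
          then have ab: "a \<in> B' i" "b = Suc n \<or> b \<in> B' (Suc r)" "i \<in> {1..Suc r}" using h by auto
          then have "a \<in> {1..n}" using Bi(1) by blast
          show ?thesis
          proof (cases "b = Suc n")
            case True then show ?thesis using \<open>a \<in> {1..n}\<close> by simp
          next
            case False
            then have "b \<in> B' (Suc i)" using ab \<open>Suc i = Suc r\<close> by auto
            then show ?thesis using Bi(3) h(1,2) ab(1) by blast
          qed
        next
          case False then show ?thesis using h Bi(3) by auto
        qed
      qed
    qed
  qed
qed



lemma CB_block_sub: "B \<in> CB n r \<Longrightarrow> B i \<subseteq> {1..n}"
  unfolding CB_def by (cases "i \<in> {1..r}") auto

lemma S_rec:
  "(\<Sum>B\<in>CB (Suc n) (Suc r). wt beta x s (Suc r) B) =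
     (\<Sum>B\<in>CB n (Suc r). wt beta x s (Suc r) B) * (1 + beta * oplus beta (x (Suc n)) (s (Suc n - r)))
   + (\<Sum>B\<in>CB n r. wt beta x s r B) * oplus beta (x (Suc n)) (s (Suc n - r))"
proof -
  define f where "f = oplus beta (x (Suc n)) (s (Suc n - r))"
  define g1 where "g1 = (\<lambda>B::nat \<Rightarrow> nat set. B(Suc r := {Suc n}))"
  define g2 where "g2 = (\<lambda>B::nat \<Rightarrow> nat set. B(Suc r := insert (Suc n) (B (Suc r))))"
  have spl: "CB (Suc n) (Suc r) = CB n (Suc r) \<union> g1 ` CB n r \<union> g2 ` CB n (Suc r)"
    unfolding g1_def g2_def by (rule CB_split)
  have nin: "\<And>B i. B \<in> CB n r' \<Longrightarrow> Suc n \<notin> B i" for r'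
    using CB_block_sub by fastforce
  have d1: "CB n (Suc r) \<inter> g1 ` CB n r = {}"
  proof (rule equals0I)
    fix B assume "B \<in> CB n (Suc r) \<inter> g1 ` CB n r"
    then obtain B' where B: "B \<in> CB n (Suc r)" "B = g1 B'" by blast
    then have "Suc n \<in> B (Suc r)" unfolding g1_def by simp
    with nin[OF B(1)] show False by blast
  qed
  have d2: "(CB n (Suc r) \<union> g1 ` CB n r) \<inter> g2 ` CB n (Suc r) = {}"
  proof -
    have "CB n (Suc r) \<inter> g2 ` CB n (Suc r) = {}"
    proof (rule equals0I)
      fix B assume "B \<in> CB n (Suc r) \<inter> g2 ` CB n (Suc r)"
      then obtain B' where B: "B \<in> CB n (Suc r)" "B = g2 B'" by blast
      then have "Suc n \<in> B (Suc r)" unfolding g2_def by simp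
      with nin[OF B(1)] show False by blast
    qed
    moreover have "g1 ` CB n r \<inter> g2 ` CB n (Suc r) = {}"
    proof (rule ccontr)
      assume "g1 ` CB n r \<inter> g2 ` CB n (Suc r) \<noteq> {}"
      then obtain B1 B2 where b: "B1 \<in> CB n r" "B2 \<in> CB n (Suc r)" "g1 B1 = g2 B2" by blast
      then have e: "{Suc n} = insert (Suc n) (B2 (Suc r))" unfolding g1_def g2_def
        by (metis fun_upd_same)
      have "B2 (Suc r) \<noteq> {}" using b(2) unfolding CB_def by auto
      then obtain c where "c \<in> B2 (Suc r)" by blast
      moreover have "c \<noteq> Suc n" using nin[OF b(2)] \<open>c \<in> B2 (Suc r)\<close> by blast
      ultimately show False using e by blast
    qed
    ultimately show ?thesis by blast
  qed
  have inj1: "inj_on g1 (CB n r)"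
  proof (rule inj_onI)
    fix B1 B2 assume b: "B1 \<in> CB n r" "B2 \<in> CB n r" "g1 B1 = g1 B2"
    have "B1 (Suc r) = {}" "B2 (Suc r) = {}" using b unfolding CB_def by auto
    then show "B1 = B2" using b(3) unfolding g1_def by (metis fun_upd_triv fun_upd_upd)
  qed
  have inj2: "inj_on g2 (CB n (Suc r))"
  proof (rule inj_onI)
    fix B1 B2 assume b: "B1 \<in> CB n (Suc r)" "B2 \<in> CB n (Suc r)" "g2 B1 = g2 B2"
    have e: "insert (Suc n) (B1 (Suc r)) = insert (Suc n) (B2 (Suc r))" using b(3) unfolding g2_def
      by (metis fun_upd_same)
    have "B1 (Suc r) = B2 (Suc r)" using e nin[OF b(1)] nin[OF b(2)]
      by (metis Diff_insert_absorb)
    moreover have "\<forall>i. i \<noteq> Suc r \<longrightarrow> B1 i = B2 i" using b(3) unfolding g2_def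
      by (metis fun_upd_other)
    ultimately show "B1 = B2" by (metis ext)
  qed
  have fin: "finite (CB n (Suc r))" "finite (g1 ` CB n r)" "finite (g2 ` CB n (Suc r))"
    using CB_finite by auto
  have s1: "(\<Sum>B\<in>g1 ` CB n r. wt beta x s (Suc r) B) = (\<Sum>B\<in>CB n r. wt beta x s r B) * f"
  proof -
    have "(\<Sum>B\<in>g1 ` CB n r. wt beta x s (Suc r) B) = (\<Sum>B\<in>CB n r. wt beta x s (Suc r) (g1 B))"
      by (rule sum.reindex[OF inj1, unfolded o_def])
    also have "\<dots> = (\<Sum>B\<in>CB n r. wt beta x s r B * f)"
      unfolding g1_def wt_upd f_def by simp
    finally show ?thesis by (simp add: sum_distrib_right)
  qed
  have s2: "(\<Sum>B\<in>g2 ` CB n (Suc r). wt beta x s (Suc r) B) = (\<Sum>B\<in>CB n (Suc r). wt beta x s (Suc r) B) * (beta * f)"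
  proof -
    have "(\<Sum>B\<in>g2 ` CB n (Suc r). wt beta x s (Suc r) B) = (\<Sum>B\<in>CB n (Suc r). wt beta x s (Suc r) (g2 B))"
      by (rule sum.reindex[OF inj2, unfolded o_def])
    also have "\<dots> = (\<Sum>B\<in>CB n (Suc r). wt beta x s (Suc r) B * (beta * f))"
    proof (rule sum.cong[OF refl])
      fix B assume B: "B \<in> CB n (Suc r)"
      have fB: "finite (B (Suc r))" by (rule CB_fin_block[OF B])
      have ne: "B (Suc r) \<noteq> {}" using B unfolding CB_def by auto
      have c: "card (B (Suc r)) \<ge> 1" using fB ne by (simp add: Suc_le_eq card_gt_0_iff)
      have nn: "Suc n \<notin> B (Suc r)" by (rule nin[OF B])
      have "wt beta x s (Suc r) (g2 B) = wt beta x s r B *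
        (beta ^ (card (B (Suc r))) * (f * (\<Prod>a\<in>B (Suc r). oplus beta (x a) (s (a + 1 - Suc r)))))"
        unfolding g2_def wt_upd using fB nn by (simp add: f_def)
      also have "\<dots> = wt beta x s r B * (beta ^ (card (B (Suc r)) - 1) *
          (\<Prod>a\<in>B (Suc r). oplus beta (x a) (s (a + 1 - Suc r)))) * (beta * f)"
      proof -
        have "beta ^ (card (B (Suc r))) = beta ^ (card (B (Suc r)) - 1) * beta"
          using c by (metis One_nat_def Suc_diff_le diff_Suc_1 power_Suc2)
        then show ?thesis by (simp add: algebra_simps)
      qed
      also have "\<dots> = wt beta x s (Suc r) B * (beta * f)" by (simp add: wt_Suc)
      finally show "wt beta x s (Suc r) (g2 B) = wt beta x s (Suc r) B * (beta * f)" .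
    qed
    finally show ?thesis by (simp add: sum_distrib_right)
  qed
  have "(\<Sum>B\<in>CB (Suc n) (Suc r). wt beta x s (Suc r) B) =
     (\<Sum>B\<in>CB n (Suc r). wt beta x s (Suc r) B) + (\<Sum>B\<in>g1 ` CB n r. wt beta x s (Suc r) B)
     + (\<Sum>B\<in>g2 ` CB n (Suc r). wt beta x s (Suc r) B)"
    unfolding spl using fin d1 d2 by (simp add: sum.union_disjoint)
  then show ?thesis unfolding s1 s2 f_def[symmetric] by (simp add: algebra_simps)
qed

lemma wt_0: "wt beta x s 0 B = 1" by (simp add: wt_def)

lemma S_col: "(\<Sum>B\<in>CB n r. wt beta x s r B) = col beta x s n r"
proof (induction n arbitrary: r)
  case 0 then show ?case by (cases r) (simp_all add: CB_0 CB_empty wt_0)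
next
  case (Suc n) then show ?case by (cases r) (simp_all only: CB_0 wt_0 S_rec col.simps sum.insert sum.empty, simp_all)
qed

lemma factG_col: "factG (replicate r 1) n beta x s = col beta x s n r"
  using factG_CB S_col by metis



lemma col_0: "col b x s n 0 = 1" by (cases n) auto

lemma uprod_Suc: "uprod beta u t (Suc m) = uprod beta u t m * oplus beta u (t (Suc m))"
  unfolding uprod_def by (simp add: prod.cl_ivl_Suc)

lemma part1:
  fixes beta u :: "'a::field" and x t :: "nat \<Rightarrow> 'a"
  assumes ht: "\<forall>j\<ge>1. 1 + beta * t j \<noteq> 0"
  shows "(\<Prod>i=1..n. oplus beta u (x i)) = uprod beta u t n +
     (\<Sum>r=1..n. uprod beta u t (n - r) * (1 + beta * oplus beta u (t (n + 1 - r)))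
        * col beta x (\<lambda>j. ominus1 beta (t j)) n r)"
proof (induction n)
  case 0 show ?case by (simp add: uprod_def)
next
  case (Suc n)
  define N where "N = Suc n"
  define s where "s = (\<lambda>j. ominus1 beta (t j))"
  define D where "D = (\<lambda>m k. uprod beta u t (m - k) * (1 + beta * oplus beta u (t (m + 1 - k))))"
  define a where "a = (\<lambda>k. 1 + beta * oplus beta (x N) (s (N + 1 - k)))"
  define b where "b = (\<lambda>k. oplus beta (x N) (s (N + 1 - k)))"
  define c where "c = col beta x s n"
  define p where "p = oplus beta u (x N)"
  have colN: "\<And>k. col beta x s N (Suc k) = c (Suc k) * a (Suc k) + c k * b (Suc k)"
    by (simp add: N_def a_def b_def c_def)
  have cn: "c N = 0" unfolding c_def N_def by (rule col_zero) simp
  have c0: "c 0 = 1" unfolding c_def by (rule col_0)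
  have key: "D N k * a k + D N (Suc k) * b (Suc k) = p * D n k" if k: "k \<in> {1..n}" for k
  proof -
    define T1 where "T1 = t (N + 1 - k)"
    define T2 where "T2 = t (N - k)"
    have "N + 1 - k \<ge> 1" using k N_def by auto
    then have h1: "1 + beta * T1 \<noteq> 0" unfolding T1_def using ht by blast
    have h2: "1 + beta * T2 \<noteq> 0" unfolding T2_def using ht k N_def by auto
    have Nk: "N - k = Suc (n - k)" using k N_def by auto
    have U: "uprod beta u t (N - k) = uprod beta u t (n - k) * oplus beta u T2"
      unfolding Nk T2_def by (simp add: uprod_Suc)
    have DN: "D N k = uprod beta u t (n - k) * oplus beta u T2 * (1 + beta * oplus beta u T1)"
      unfolding D_def U T1_def by simp
    have DN1: "D N (Suc k) = uprod beta u t (n - k) * (1 + beta * oplus beta u T2)"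
      unfolding D_def T2_def using N_def by simp
    have Dn: "D n k = uprod beta u t (n - k) * (1 + beta * oplus beta u T2)"
      unfolding D_def T2_def using N_def k by (simp add: Suc_diff_le)
    have ak: "a k = 1 + beta * oplus beta (x N) (ominus1 beta T1)" unfolding a_def s_def T1_def by simp
    have bk: "b (Suc k) = oplus beta (x N) (ominus1 beta T2)" unfolding b_def s_def T2_def by simp
    have "D N k * a k + D N (Suc k) * b (Suc k) = uprod beta u t (n - k) *
      (oplus beta u T2 * (1 + beta * oplus beta u T1) * (1 + beta * oplus beta (x N) (ominus1 beta T1))
     + (1 + beta * oplus beta u T2) * oplus beta (x N) (ominus1 beta T2))"
      unfolding DN DN1 ak bk by (simp add: algebra_simps)
    also have "\<dots> = uprod beta u t (n - k) * (p * (1 + beta * oplus beta u T2))"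
      unfolding alg1[OF h1 h2] p_def ..
    finally show ?thesis unfolding Dn by (simp add: algebra_simps)
  qed
  have key0: "uprod beta u t N + D N 1 * b 1 = p * uprod beta u t n"
  proof -
    have h: "1 + beta * t N \<noteq> 0" using ht N_def by auto
    have "uprod beta u t N + D N 1 * b 1 = uprod beta u t n *
       (oplus beta u (t N) + (1 + beta * oplus beta u (t N)) * oplus beta (x N) (ominus1 beta (t N)))"
      unfolding D_def b_def s_def N_def by (simp add: uprod_Suc algebra_simps)
    also have "\<dots> = p * uprod beta u t n" unfolding alg2[OF h] p_def by simp
    finally show ?thesis .
  qed
  have IH: "(\<Prod>i=1..n. oplus beta u (x i)) = uprod beta u t n + (\<Sum>k=1..n. D n k * c k)"
    using Suc.IH unfolding D_def c_def s_def by simp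
  have S: "(\<Sum>r=1..N. D N r * col beta x s N r) = (\<Sum>k=0..n. D N (Suc k) * col beta x s N (Suc k))"
    unfolding N_def using sum.shift_bounds_cl_Suc_ivl[of "\<lambda>r. D (Suc n) r * col beta x s (Suc n) r" 0 n] by simp
  also have "\<dots> = (\<Sum>k=0..n. D N (Suc k) * a (Suc k) * c (Suc k)) + (\<Sum>k=0..n. D N (Suc k) * b (Suc k) * c k)"
    unfolding colN by (simp add: algebra_simps sum.distrib)
  also have "(\<Sum>k=0..n. D N (Suc k) * a (Suc k) * c (Suc k)) = (\<Sum>k=1..N. D N k * a k * c k)"
    unfolding N_def using sum.shift_bounds_cl_Suc_ivl[of "\<lambda>k. D (Suc n) k * a k * c k" 0 n] by simp
  also have "\<dots> = (\<Sum>k=1..n. D N k * a k * c k)"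
    using cn by (simp add: N_def sum.cl_ivl_Suc)
  also have "(\<Sum>k=0..n. D N (Suc k) * b (Suc k) * c k) = D N 1 * b 1 + (\<Sum>k=1..n. D N (Suc k) * b (Suc k) * c k)"
    by (simp add: sum.atLeast_Suc_atMost c0)
  finally have S2: "(\<Sum>r=1..N. D N r * col beta x s N r) = D N 1 * b 1 +
      (\<Sum>k=1..n. (D N k * a k + D N (Suc k) * b (Suc k)) * c k)"
    by (simp add: algebra_simps sum.distrib)
  have "uprod beta u t N + (\<Sum>r=1..N. D N r * col beta x s N r) =
     (uprod beta u t N + D N 1 * b 1) + (\<Sum>k=1..n. (D N k * a k + D N (Suc k) * b (Suc k)) * c k)"
    unfolding S2 by simp
  also have "\<dots> = p * uprod beta u t n + (\<Sum>k=1..n. p * D n k * c k)"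
    unfolding key0 using key by (simp add: algebra_simps)
  also have "\<dots> = p * (\<Prod>i=1..n. oplus beta u (x i))"
    unfolding IH by (simp add: sum_distrib_left algebra_simps)
  also have "\<dots> = (\<Prod>i=1..N. oplus beta u (x i))"
    unfolding N_def p_def by (simp add: prod.cl_ivl_Suc)
  finally show ?case unfolding N_def D_def s_def by simp
qed



lemma esym_0: "esym n x 0 = 1"
proof -
  have "{S. S \<subseteq> {1..n} \<and> card S = 0} = {{}}"
  proof (intro equalityI subsetI)
    fix S assume "S \<in> {S. S \<subseteq> {1..n} \<and> card S = 0}"
    then have "S \<subseteq> {1..n}" "card S = 0" by auto
    moreover have "finite S" using finite_subset[OF \<open>S \<subseteq> {1..n}\<close>] by simp
    ultimately show "S \<in> {{}}" by simp
  qed auto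
  then show ?thesis unfolding esym_def by simp
qed

lemma esym_empty: "esym 0 x (Suc r) = 0"
proof -
  have e: "{S. S \<subseteq> {1..0::nat} \<and> card S = Suc r} = {}" by auto
  show ?thesis unfolding esym_def e by simp
qed

lemma esym_Suc: "esym (Suc n) x (Suc r) = esym n x (Suc r) + x (Suc n) * esym n x r"
proof -
  define A where "A = {S. S \<subseteq> {1..n} \<and> card S = Suc r}"
  define B where "B = {S. S \<subseteq> {1..n} \<and> card S = r}"
  have finA: "finite A" unfolding A_def by (rule finite_subset[of _ "Pow {1..n}"]) auto
  have finB: "finite B" unfolding B_def by (rule finite_subset[of _ "Pow {1..n}"]) auto
  have spl: "{S. S \<subseteq> {1..Suc n} \<and> card S = Suc r} = A \<union> insert (Suc n) ` B"
  proof (intro equalityI subsetI)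
    fix S assume "S \<in> {S. S \<subseteq> {1..Suc n} \<and> card S = Suc r}"
    then have S: "S \<subseteq> {1..Suc n}" "card S = Suc r" by auto
    have fS: "finite S" using finite_subset[OF S(1)] by simp
    show "S \<in> A \<union> insert (Suc n) ` B"
    proof (cases "Suc n \<in> S")
      case False
      then have "S \<subseteq> {1..n}" using S(1) by (auto simp: subset_iff le_Suc_eq)
      then show ?thesis using S(2) unfolding A_def by auto
    next
      case True
      have "S - {Suc n} \<subseteq> {1..n}" using S(1) by (auto simp: subset_iff le_Suc_eq)
      moreover have "card (S - {Suc n}) = r" using S(2) True fS by simp
      moreover have "S = insert (Suc n) (S - {Suc n})" using True by auto
      ultimately show ?thesis unfolding B_def by blast
    qed
  next
    fix S assume "S \<in> A \<union> insert (Suc n) ` B"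
    then consider "S \<in> A" | T where "T \<in> B" "S = insert (Suc n) T" by blast
    then show "S \<in> {S. S \<subseteq> {1..Suc n} \<and> card S = Suc r}"
    proof cases
      case 1 then show ?thesis unfolding A_def by auto
    next
      case 2
      have "T \<subseteq> {1..n}" using 2(1) unfolding B_def by blast
      then have fT: "finite T" by (rule finite_subset) simp
      have "Suc n \<notin> T" using 2(1) unfolding B_def by auto
      then show ?thesis using 2 fT unfolding B_def by auto
    qed
  qed
  have disj: "A \<inter> insert (Suc n) ` B = {}" unfolding A_def B_def by auto
  have inj: "inj_on (insert (Suc n)) B"
  proof (rule inj_onI)
    fix S T assume "S \<in> B" "T \<in> B" "insert (Suc n) S = insert (Suc n) T"
    moreover have "Suc n \<notin> S" "Suc n \<notin> T" using \<open>S \<in> B\<close> \<open>T \<in> B\<close> unfolding B_def by auto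
    ultimately show "S = T" by (metis Diff_insert_absorb)
  qed
  have "esym (Suc n) x (Suc r) = (\<Sum>S\<in>A. prod x S) + (\<Sum>S\<in>insert (Suc n) ` B. prod x S)"
    unfolding esym_def spl using finA finB disj by (simp add: sum.union_disjoint)
  also have "(\<Sum>S\<in>insert (Suc n) ` B. prod x S) = (\<Sum>S\<in>B. prod x (insert (Suc n) S))"
    by (rule sum.reindex[OF inj, unfolded o_def])
  also have "\<dots> = (\<Sum>S\<in>B. x (Suc n) * prod x S)"
  proof (rule sum.cong[OF refl])
    fix S assume "S \<in> B"
    then have sS: "S \<subseteq> {1..n}" unfolding B_def by blast
    then have "finite S" "Suc n \<notin> S" using finite_subset[OF sS] by auto
    then show "prod x (insert (Suc n) S) = x (Suc n) * prod x S" by simp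
  qed
  finally show ?thesis unfolding esym_def A_def B_def by (simp add: sum_distrib_left)
qed

lemma aux_ring: "(beta::'a::field) * (q * c1) + (- beta * q) * (c1 + c2) = (- beta * q) * c2"
  by (simp add: algebra_simps)

lemma aux_ring2: "(Y::'a::field) * (1 + beta * x) + x * Z = Y + x * (beta * Y + Z)"
  by (simp add: algebra_simps)

definition cc :: "'a::field \<Rightarrow> nat \<Rightarrow> nat \<Rightarrow> 'a" where
  "cc beta r s = (if r \<le> s then (- beta) ^ (s - r) * of_nat ((s - 1) choose (s - r)) else 0)"

lemma cc_rec: "beta * cc beta (Suc r) s + cc beta (Suc r) (Suc s) = cc beta r s"
proof (cases "s < r")
  case True then show ?thesis by (simp add: cc_def)
next
  case False
  show ?thesis
  proof (cases "s = r")
    case True then show ?thesis by (simp add: cc_def)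
  next
    case False
    define m where "m = s - Suc r"
    have m: "s = Suc r + m" unfolding m_def using False \<open>\<not> s < r\<close> by simp
    obtain s' where s': "s = Suc s'" using m by auto
    have e1: "cc beta (Suc r) s = (- beta) ^ m * of_nat (s' choose m)" unfolding cc_def using m s' by simp
    have e2: "cc beta (Suc r) (Suc s) = (- beta) ^ Suc m * of_nat (Suc s' choose Suc m)" unfolding cc_def using m s' by simp
    have e3: "cc beta r s = (- beta) ^ Suc m * of_nat (s' choose Suc m)" unfolding cc_def using m s' by simp
    show ?thesis unfolding e1 e2 e3 binomial_Suc_Suc of_nat_add power_Suc by (rule aux_ring)
  qed
qed

lemma part3:
  fixes beta :: "'a::field" and x :: "nat \<Rightarrow> 'a"
  shows "esym n x r = (\<Sum>s\<le>n. cc beta r s * col beta x (\<lambda>_. 0) n s)"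
proof (induction n arbitrary: r)
  case 0 then show ?case by (cases r) (simp_all add: esym_0 esym_empty cc_def)
next
  case (Suc n)
  define G where "G = col beta x (\<lambda>_. 0)"
  have Grec: "\<And>k. G (Suc n) (Suc k) = G n (Suc k) * (1 + beta * x (Suc n)) + G n k * x (Suc n)"
    unfolding G_def by (simp add: oplus_def)
  have Gz: "G n (Suc n) = 0" unfolding G_def by (rule col_zero) simp
  show ?case
  proof (cases r)
    case 0
    have "(\<Sum>s\<le>Suc n. cc beta 0 s * G (Suc n) s) = cc beta 0 0 * G (Suc n) 0 + (\<Sum>s\<le>n. cc beta 0 (Suc s) * G (Suc n) (Suc s))"
      by (rule sum.atMost_Suc_shift)
    also have "\<dots> = 1" by (simp add: cc_def G_def col_0 binomial_eq_0)
    finally show ?thesis using 0 esym_0 G_def by simp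
  next
    case (Suc r')
    define Y where "Y = (\<Sum>s\<le>n. cc beta r s * G n s)"
    have a: "(\<Sum>s\<le>n. cc beta r (Suc s) * G n (Suc s)) = Y"
    proof -
      have "(\<Sum>s\<le>Suc n. cc beta r s * G n s) = cc beta r 0 * G n 0 + (\<Sum>s\<le>n. cc beta r (Suc s) * G n (Suc s))"
        by (rule sum.atMost_Suc_shift)
      moreover have "(\<Sum>s\<le>Suc n. cc beta r s * G n s) = Y" unfolding Y_def using Gz by simp
      moreover have "cc beta r 0 = 0" using Suc by (simp add: cc_def)
      ultimately show ?thesis by simp
    qed
    have bY: "beta * Y + (\<Sum>s\<le>n. cc beta r (Suc s) * G n s) = (\<Sum>s\<le>n. (beta * cc beta r s + cc beta r (Suc s)) * G n s)"
      unfolding Y_def by (simp add: sum.distrib sum_distrib_left ring_distribs mult.assoc)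
    have "(\<Sum>s\<le>Suc n. cc beta r s * G (Suc n) s) = cc beta r 0 * G (Suc n) 0 + (\<Sum>s\<le>n. cc beta r (Suc s) * G (Suc n) (Suc s))"
      by (rule sum.atMost_Suc_shift)
    also have "\<dots> = (\<Sum>s\<le>n. cc beta r (Suc s) * G (Suc n) (Suc s))"
      using Suc by (simp add: cc_def)
    also have "\<dots> = (\<Sum>s\<le>n. cc beta r (Suc s) * G n (Suc s)) * (1 + beta * x (Suc n))
        + x (Suc n) * (\<Sum>s\<le>n. cc beta r (Suc s) * G n s)"
      unfolding Grec by (simp add: sum.distrib sum_distrib_left sum_distrib_right ring_distribs mult_ac)
    also have "\<dots> = Y * (1 + beta * x (Suc n)) + x (Suc n) * (\<Sum>s\<le>n. cc beta r (Suc s) * G n s)"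
      unfolding a ..
    also have "\<dots> = Y + x (Suc n) * (\<Sum>s\<le>n. (beta * cc beta r s + cc beta r (Suc s)) * G n s)"
      unfolding bY[symmetric] by (rule aux_ring2)
    also have "\<dots> = Y + x (Suc n) * (\<Sum>s\<le>n. cc beta r' s * G n s)"
      unfolding Suc cc_rec ..
    also have "\<dots> = esym (Suc n) x r"
      unfolding Suc esym_Suc Y_def G_def using Suc.IH Suc by simp
    finally show ?thesis unfolding G_def by (rule sym)
  qed
qed



theorem mainTheorem5:
  fixes beta u :: "'a::field" and x :: "nat \<Rightarrow> 'a" and n :: nat
  shows "(\<forall>t :: nat \<Rightarrow> 'a. (\<forall>j\<ge>1. 1 + beta * t j \<noteq> 0) \<longrightarrow>
           (\<Prod>i=1..n. oplus beta u (x i)) =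
             uprod beta u t n + (\<Sum>r=1..n. uprod beta u t (n - r)
               * (1 + beta * oplus beta u (t (n + 1 - r)))
               * factG (replicate r 1) n beta x (\<lambda>j. ominus1 beta (t j))))
       \<and> (\<Prod>i=1..n. oplus beta u (x i)) =
           u ^ n + (1 + beta * u) * (\<Sum>r=1..n. u ^ (n - r) * factG (replicate r 1) n beta x (\<lambda>_. 0))
       \<and> (\<forall>r\<in>{1..n}. esym n x r =
           (\<Sum>s=r..n. (- beta) ^ (s - r) * of_nat ((s - 1) choose (s - r))
                        * factG (replicate s 1) n beta x (\<lambda>_. 0)))"
proof (intro conjI)
  show P1: "\<forall>t :: nat \<Rightarrow> 'a. (\<forall>j\<ge>1. 1 + beta * t j \<noteq> 0) \<longrightarrow>
           (\<Prod>i=1..n. oplus beta u (x i)) =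
             uprod beta u t n + (\<Sum>r=1..n. uprod beta u t (n - r)
               * (1 + beta * oplus beta u (t (n + 1 - r)))
               * factG (replicate r 1) n beta x (\<lambda>j. ominus1 beta (t j)))"
  proof (intro allI impI)
    fix t :: "nat \<Rightarrow> 'a" assume "\<forall>j\<ge>1. 1 + beta * t j \<noteq> 0"
    then show "(\<Prod>i=1..n. oplus beta u (x i)) =
             uprod beta u t n + (\<Sum>r=1..n. uprod beta u t (n - r)
               * (1 + beta * oplus beta u (t (n + 1 - r)))
               * factG (replicate r 1) n beta x (\<lambda>j. ominus1 beta (t j)))"
      unfolding factG_col by (rule part1)
  qed
  have z: "(\<lambda>j. ominus1 beta ((\<lambda>_. 0::'a) j)) = (\<lambda>_. 0)" by (simp add: ominus1_def)
  have up: "\<And>m. uprod beta u (\<lambda>_. 0) m = u ^ m" by (simp add: uprod_def oplus_def)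
  have "(\<Prod>i=1..n. oplus beta u (x i)) = u ^ n + (\<Sum>r=1..n. u ^ (n - r) * (1 + beta * u)
               * factG (replicate r 1) n beta x (\<lambda>_. 0))"
    using P1[rule_format, of "\<lambda>_. 0"] unfolding z up by (simp add: oplus_def)
  then show "(\<Prod>i=1..n. oplus beta u (x i)) =
           u ^ n + (1 + beta * u) * (\<Sum>r=1..n. u ^ (n - r) * factG (replicate r 1) n beta x (\<lambda>_. 0))"
    by (simp add: sum_distrib_left algebra_simps)
  show "\<forall>r\<in>{1..n}. esym n x r =
           (\<Sum>s=r..n. (- beta) ^ (s - r) * of_nat ((s - 1) choose (s - r))
                        * factG (replicate s 1) n beta x (\<lambda>_. 0))"
  proof
    fix r assume r: "r \<in> {1..n}"
    have "esym n x r = (\<Sum>s\<le>n. cc beta r s * col beta x (\<lambda>_. 0) n s)" by (rule part3)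
    also have "\<dots> = (\<Sum>s=r..n. (- beta) ^ (s - r) * of_nat ((s - 1) choose (s - r))
                        * factG (replicate s 1) n beta x (\<lambda>_. 0))"
    proof (rule sum.mono_neutral_cong_right)
      show "finite {..n}" by simp
      show "{r..n} \<subseteq> {..n}" by auto
      show "\<forall>i\<in>{..n} - {r..n}. cc beta r i * col beta x (\<lambda>_. 0) n i = 0"
        by (auto simp: cc_def)
      show "\<And>s. s \<in> {r..n} \<Longrightarrow> cc beta r s * col beta x (\<lambda>_. 0) n s =
          (- beta) ^ (s - r) * of_nat ((s - 1) choose (s - r)) * factG (replicate s 1) n beta x (\<lambda>_. 0)"
        unfolding factG_col cc_def by simp
    qed
    finally show "esym n x r = (\<Sum>s=r..n. (- beta) ^ (s - r) * of_nat ((s - 1) choose (s - r))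
                        * factG (replicate s 1) n beta x (\<lambda>_. 0))" .
  qed
qed


end
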